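(* Let $\mathcal{C}=\mathsf{CSS}(A,B)$ be an $[\![n,k,d]\!]$ qudit CSS code with $d\geq 3$. The number of distinct logical operations that can be implemented by permutations of the physical qudits that preserve the codespace is at most $\frac{n!}{k_{\max}!}$, where $k_{\max}=\max\{\dim A,\dim B\}$.
   Context: Let $q$ be a prime power. $A,B\subseteq\mathbb{F}_q^n$ are classical codes with parity-check matrices $H_A,H_B$ (of full row rank) satisfying $H_AH_B^T=0$; $\mathsf{CSS}(A,B)$ is the qudit stabilizer code whose $X$-type stabilizers are the generalized Paulis $X^{v}$ for $v$ in the row space of $H_A$ and whose $Z$-type stabilizers are $Z^{w}$ for $w$ in the row space of $H_B$. It has $n$ physical qudits, $k=\dim A+\dim B-n$ logical qudits, and distance $d$. A permutation of the physical qudits preserving the codespace is a logical operator; two such are counted as the same logical operation if they act identically on the codespace. *)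

theory Defs
  imports "HOL-Analysis.Analysis" "HOL-Combinatorics.Permutations"
begin

text \<open>Vectors of F_q^n are modelled as 'a^'n with 'a a finite field and 'n a finite
index type (n = CARD('n)). Qudit states on n qudits are functions ('a^'n) => complex
(coefficients in the computational basis).\<close>

definition dotp :: "'a::field ^ 'n::finite \<Rightarrow> 'a ^ 'n \<Rightarrow> 'a" where
  "dotp u v = (\<Sum>i\<in>UNIV. u $ i * v $ i)"

definition dual_code :: "('a::field ^ 'n::finite) set \<Rightarrow> ('a ^ 'n) set" where
  "dual_code C = {v. \<forall>c\<in>C. dotp v c = 0}"

definition hweight :: "'a::zero ^ 'n::finite \<Rightarrow> nat" where
  "hweight v = card {i. v $ i \<noteq> 0}"

text \<open>A nontrivial additive character chi : F_q -> C (e.g. omega^tr(.)), used for Z.\<close>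
definition nontriv_add_char :: "('a::field \<Rightarrow> complex) \<Rightarrow> bool" where
  "nontriv_add_char chi \<longleftrightarrow> (\<forall>a b. chi (a + b) = chi a * chi b) \<and> (\<exists>a. chi a \<noteq> 1)"

text \<open>Generalized Paulis: X^v |x> = |x+v>,  Z^w |x> = chi(w.x) |x>.\<close>
definition pauliX :: "'a::field ^ 'n::finite \<Rightarrow> ('a ^ 'n \<Rightarrow> complex) \<Rightarrow> ('a ^ 'n \<Rightarrow> complex)" where
  "pauliX v psi = (\<lambda>x. psi (x - v))"

definition pauliZ :: "('a::field \<Rightarrow> complex) \<Rightarrow> 'a ^ 'n::finite \<Rightarrow> ('a ^ 'n \<Rightarrow> complex) \<Rightarrow> ('a ^ 'n \<Rightarrow> complex)" where
  "pauliZ chi w psi = (\<lambda>x. chi (dotp w x) * psi x)"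

text \<open>CSS(A,B): X-stabilizers X^v for v in the row space of H_A (= dual of A),
Z-stabilizers Z^w for w in the row space of H_B (= dual of B).\<close>
definition css_codespace :: "('a::field \<Rightarrow> complex) \<Rightarrow> ('a ^ 'n::finite) set \<Rightarrow> ('a ^ 'n) set
    \<Rightarrow> ('a ^ 'n \<Rightarrow> complex) set" where
  "css_codespace chi A B = {psi. (\<forall>v\<in>dual_code A. pauliX v psi = psi) \<and>
                                 (\<forall>w\<in>dual_code B. pauliZ chi w psi = psi)}"

text \<open>Distance: minimum weight of a nontrivial logical operator,
i.e. of a vector in (A - B^perp) or (B - A^perp). "d >= t" means all such have weight >= t.\<close>
definition css_distance_ge :: "('a::field ^ 'n::finite) set \<Rightarrow> ('a ^ 'n) set \<Rightarrow> nat \<Rightarrow> bool" where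
  "css_distance_ge A B t \<longleftrightarrow>
     (\<forall>v \<in> (A - dual_code B) \<union> (B - dual_code A). t \<le> hweight v)"

text \<open>Permutation of physical qudits (qudit s i is sent to position i).\<close>
definition perm_op :: "('n::finite \<Rightarrow> 'n) \<Rightarrow> ('a ^ 'n \<Rightarrow> complex) \<Rightarrow> ('a ^ 'n \<Rightarrow> complex)" where
  "perm_op s psi = (\<lambda>x. psi (\<chi> i. x $ s i))"

text \<open>The set of logical operations implemented by codespace-preserving qudit permutations:
each such permutation is identified with its action restricted to the codespace.\<close>
definition perm_logical_ops :: "('a ^ 'n::finite \<Rightarrow> complex) set
    \<Rightarrow> (('a ^ 'n \<Rightarrow> complex) \<Rightarrow> ('a ^ 'n \<Rightarrow> complex)) set" where
  "perm_logical_ops C =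
     (\<lambda>s. restrict (perm_op s) C) ` {s. s permutes (UNIV::'n set) \<and> perm_op s ` C = C}"

end

theory Submission
  imports Defs
begin

definition ev :: "'n::finite \<Rightarrow> 'a::field ^ 'n" where
  "ev i = (\<chi> k. if k = i then 1 else 0)"

definition pv :: "('n::finite \<Rightarrow> 'n) \<Rightarrow> 'a ^ 'n \<Rightarrow> 'a ^ 'n" where
  "pv s x = (\<chi> i. x $ s i)"

lemma dotp_sym: "dotp u v = dotp v (u::'a::field^'n::finite)"
  unfolding dotp_def by (simp add: mult.commute)

lemma dotp_ev: "dotp (ev k) v = v $ k"
proof -
  have "dotp (ev k) v = (\<Sum>i\<in>UNIV. if i = k then v $ k else 0)"
    unfolding dotp_def ev_def by (intro sum.cong) auto
  then show ?thesis by simp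
qed

lemma dotp_diff: "dotp (a - b) v = dotp a v - dotp b (v::'a::field^'n::finite)"
  unfolding dotp_def by (simp add: algebra_simps sum_subtractf)

lemma dotp_add: "dotp (a + b) v = dotp a v + dotp b (v::'a::field^'n::finite)"
  unfolding dotp_def by (simp add: algebra_simps sum.distrib)

lemma dotp_scale: "dotp (c *s a) v = c * dotp a (v::'a::field^'n::finite)"
  unfolding dotp_def by (simp add: algebra_simps sum_distrib_left)

lemma dotp_sum: "dotp (sum f S) v = (\<Sum>j\<in>S. dotp (f j) (v::'a::field^'n::finite))"
  unfolding dotp_def by (simp add: sum_component sum_distrib_right sum.swap[of _ S])

lemma dotp_zero: "dotp 0 v = (0::'a::field)"
  unfolding dotp_def by simp

lemma dual_zero: "0 \<in> dual_code V"
  unfolding dual_code_def by (simp add: dotp_zero)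

lemma dual_diff: "a \<in> dual_code V \<Longrightarrow> b \<in> dual_code V \<Longrightarrow> a - b \<in> dual_code V"
  unfolding dual_code_def by (simp add: dotp_diff)

lemma dual_add: "a \<in> dual_code V \<Longrightarrow> b \<in> dual_code V \<Longrightarrow> a + b \<in> dual_code V"
  unfolding dual_code_def by (simp add: dotp_add)

lemma dual_scale: "a \<in> dual_code V \<Longrightarrow> c *s a \<in> dual_code V"
  unfolding dual_code_def by (simp add: dotp_scale)

lemma dual_neg: "a \<in> dual_code V \<Longrightarrow> - a \<in> dual_code V"
  using dual_diff[OF dual_zero, of a V] by simp

lemma infoset:
  fixes V :: "('a::field ^ 'n::finite) set"
  assumes sub: "vec.subspace V"
  obtains J u where "\<forall>j\<in>J. u j \<in> V \<and> u j $ j = 1 \<and> (\<forall>j'\<in>J. j' \<noteq> j \<longrightarrow> u j $ j' = 0)"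
   and "\<forall>v\<in>V. v = (\<Sum>j\<in>J. (v $ j) *s u j)"
   and "vec.dim V \<le> card J"
   and "dual_code (dual_code V) \<subseteq> V"
proof -
  define U where "U J \<longleftrightarrow> (\<forall>j\<in>J. \<exists>a\<in>V. a $ j = 1 \<and> (\<forall>j'\<in>J. j' \<noteq> j \<longrightarrow> a $ j' = 0))" for J :: "'n set"
  have U0: "U {}" unfolding U_def by simp
  define M where "M = Max (card ` {J. U J})"
  have fin: "finite (card ` {J. U J})" by simp
  have "M \<in> card ` {J. U J}" unfolding M_def using U0 fin by (intro Max_in) auto
  then obtain J where UJ: "U J" and cJ: "card J = M" by auto
  have maxM: "U J' \<Longrightarrow> card J' \<le> M" for J' unfolding M_def using fin by (intro Max_ge) auto
  from UJ obtain u where u: "\<forall>j\<in>J. u j \<in> V \<and> u j $ j = 1 \<and> (\<forall>j'\<in>J. j' \<noteq> j \<longrightarrow> u j $ j' = 0)"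
    unfolding U_def by metis
  have vanish: "v = 0" if v: "v \<in> V" "\<forall>j\<in>J. v $ j = 0" for v
  proof (rule ccontr)
    assume "v \<noteq> 0"
    then obtain i where vi: "v $ i \<noteq> 0" by (metis vec_eq_iff zero_index)
    with v have iJ: "i \<notin> J" by auto
    have "U (insert i J)"
      unfolding U_def
    proof
      fix j assume j: "j \<in> insert i J"
      show "\<exists>a\<in>V. a $ j = 1 \<and> (\<forall>j'\<in>insert i J. j' \<noteq> j \<longrightarrow> a $ j' = 0)"
      proof (cases "j = i")
        case True
        show ?thesis
          by (rule bexI[of _ "inverse (v $ i) *s v"]) (use True vi v sub in \<open>auto intro: vec.subspace_scale\<close>)
      next
        case False
        with j have jJ: "j \<in> J" by auto
        show ?thesis
          by (rule bexI[of _ "u j - ((u j $ i) / (v $ i)) *s v"])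
             (use jJ u vi v sub iJ in \<open>auto intro!: vec.subspace_diff vec.subspace_scale\<close>)
      qed
    qed
    then have "card (insert i J) \<le> M" by (rule maxM)
    with iJ cJ show False by simp
  qed
  have decomp: "\<forall>v\<in>V. v = (\<Sum>j\<in>J. (v $ j) *s u j)"
  proof
    fix v assume v: "v \<in> V"
    have "v - (\<Sum>j\<in>J. (v $ j) *s u j) = 0"
    proof (rule vanish)
      show "v - (\<Sum>j\<in>J. (v $ j) *s u j) \<in> V"
        using v u sub by (intro vec.subspace_diff vec.subspace_sum vec.subspace_scale) auto
      show "\<forall>j\<in>J. (v - (\<Sum>j\<in>J. (v $ j) *s u j)) $ j = 0"
      proof
        fix j0 assume j0: "j0 \<in> J"
        have "(\<Sum>j\<in>J. (v $ j) *s u j) $ j0 = (\<Sum>j\<in>J. v $ j * u j $ j0)"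
          by (simp add: sum_component)
        also have "\<dots> = (\<Sum>j\<in>J. if j = j0 then v $ j0 else 0)"
          using u j0 by (intro sum.cong) auto
        also have "\<dots> = v $ j0" using j0 by simp
        finally show "(v - (\<Sum>j\<in>J. (v $ j) *s u j)) $ j0 = 0" by simp
      qed
    qed
    then show "v = (\<Sum>j\<in>J. (v $ j) *s u j)" by simp
  qed
  have dim: "vec.dim V \<le> card J"
  proof -
    have "V \<subseteq> vec.span (u ` J)"
    proof
      fix v assume "v \<in> V"
      then have "v = (\<Sum>j\<in>J. (v $ j) *s u j)" using decomp by blast
      also have "\<dots> \<in> vec.span (u ` J)"
        by (intro vec.span_sum vec.span_scale vec.span_base) auto
      finally show "v \<in> vec.span (u ` J)" .
    qed
    then have "vec.dim V \<le> card (u ` J)" by (rule vec.dim_le_card) auto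
    also have "\<dots> \<le> card J" by (rule card_image_le) auto
    finally show ?thesis .
  qed
  have dd: "dual_code (dual_code V) \<subseteq> V"
  proof
    fix x assume x: "x \<in> dual_code (dual_code V)"
    have xi: "x $ i = (\<Sum>j\<in>J. x $ j * u j $ i)" if iJ: "i \<notin> J" for i
    proof -
      define w where "w = ev i - (\<Sum>j\<in>J. (u j $ i) *s ev j)"
      have wv: "dotp w v = v $ i - (\<Sum>j\<in>J. u j $ i * v $ j)" for v
        unfolding w_def by (simp add: dotp_diff dotp_sum dotp_scale dotp_ev)
      have "w \<in> dual_code V"
        unfolding dual_code_def
      proof (intro CollectI ballI)
        fix c assume c: "c \<in> V"
        have "c $ i = (\<Sum>j\<in>J. (c $ j) *s u j) $ i" using decomp c by metis
        also have "\<dots> = (\<Sum>j\<in>J. c $ j * u j $ i)" by (simp add: sum_component)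
        also have "\<dots> = (\<Sum>j\<in>J. u j $ i * c $ j)" by (intro sum.cong) (auto simp: mult.commute)
        finally have ci: "c $ i = (\<Sum>j\<in>J. u j $ i * c $ j)" .
        show "dotp w c = 0" unfolding wv by (subst ci) simp
      qed
      then have "dotp x w = 0" using x unfolding dual_code_def by blast
      then have "dotp w x = 0" by (simp add: dotp_sym)
      then have "x $ i = (\<Sum>j\<in>J. u j $ i * x $ j)" by (simp add: wv)
      also have "\<dots> = (\<Sum>j\<in>J. x $ j * u j $ i)" by (intro sum.cong) (auto simp: mult.commute)
      finally show ?thesis .
    qed
    have "x = (\<Sum>j\<in>J. (x $ j) *s u j)"
    proof (subst vec_eq_iff, intro allI)
      fix i
      show "x $ i = (\<Sum>j\<in>J. (x $ j) *s u j) $ i"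
      proof (cases "i \<in> J")
        case True
        have "(\<Sum>j\<in>J. (x $ j) *s u j) $ i = (\<Sum>j\<in>J. if j = i then x $ i else 0)"
          unfolding sum_component using u True by (intro sum.cong) auto
        then show ?thesis using True by simp
      next
        case False
        then show ?thesis using xi[OF False] by (simp add: sum_component)
      qed
    qed
    also have "\<dots> \<in> V"
      using u sub by (intro vec.subspace_sum vec.subspace_scale) auto
    finally show "x \<in> V" .
  qed
  show ?thesis using that u decomp dim dd by blast
qed

lemma pv_index[simp]: "pv s x $ i = x $ s i"
  unfolding pv_def by simp

lemma perm_op_pv: "perm_op s psi = (\<lambda>x. psi (pv s x))"
  unfolding perm_op_def pv_def by simp

lemma pv_comp: "pv a (pv b x) = pv (b \<circ> a) x"
  by (simp add: vec_eq_iff)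

lemma perm_op_comp: "perm_op (t \<circ> s) psi = perm_op t (perm_op s psi)"
  unfolding perm_op_pv by (simp add: pv_comp)

lemma perm_op_id: "perm_op id psi = psi"
  unfolding perm_op_pv by (simp add: vec_eq_iff pv_def)

lemma pv_diff: "pv s (x - y) = pv s x - pv s (y::'a::field^'n::finite)"
  by (simp add: vec_eq_iff)

lemma pv_neg: "pv s (- x) = - pv s (x::'a::field^'n::finite)"
  by (simp add: vec_eq_iff)

lemma pv_zero: "pv s 0 = (0::'a::field^'n::finite)"
  by (simp add: vec_eq_iff)

lemma ev_index: "ev i $ k = (if k = i then 1 else 0)"
  unfolding ev_def by simp

lemma hweight_ev2: "hweight (ev i - ev k :: 'a::field^'n::finite) \<le> 2"
proof -
  have "{m. (ev i - ev k :: 'a^'n) $ m \<noteq> 0} \<subseteq> {i, k}"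
    by (auto simp: ev_index)
  then have "hweight (ev i - ev k :: 'a^'n) \<le> card {i, k}"
    unfolding hweight_def by (intro card_mono) auto
  also have "card {i, k} \<le> 2" by (cases "i = k") auto
  finally show ?thesis .
qed

lemma dotp_ev2: "dotp (ev i - ev k) x = x $ i - x $ (k::'n::finite)"
  by (simp add: dotp_diff dotp_ev)

lemma in_dd: "b \<in> V \<Longrightarrow> b \<in> dual_code (dual_code V)"
  unfolding dual_code_def by (auto simp: dotp_sym)

lemma vanish_on_J:
  fixes z :: "'a::field^'n::finite"
  assumes u: "\<forall>j\<in>J. u j $ j = 1 \<and> (\<forall>j'\<in>J. j' \<noteq> j \<longrightarrow> u j $ j' = 0)"
    and out: "\<forall>i. i \<notin> J \<longrightarrow> z $ i = 0"
    and orth: "\<forall>j\<in>J. dotp z (u j) = 0"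
  shows "z = 0"
proof (subst vec_eq_iff, intro allI)
  fix j
  show "z $ j = 0 $ j"
  proof (cases "j \<in> J")
    case False then show ?thesis using out by simp
  next
    case True
    have "dotp z (u j) = (\<Sum>i\<in>UNIV. if i = j then z $ j else 0)"
      unfolding dotp_def
    proof (intro sum.cong refl)
      fix i
      show "z $ i * u j $ i = (if i = j then z $ j else 0)"
        using u True out by (cases "i = j"; cases "i \<in> J") auto
    qed
    then have "dotp z (u j) = z $ j" by simp
    with orth True show ?thesis by simp
  qed
qed

locale cssl =
  fixes A B :: "('a::{field,finite} ^ 'n::finite) set" and chi :: "'a \<Rightarrow> complex"
  assumes subA: "vec.subspace A" and subB: "vec.subspace B"
    and orth: "\<forall>u\<in>dual_code A. \<forall>w\<in>dual_code B. dotp u w = 0"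
    and chi: "nontriv_add_char chi"
    and dist: "css_distance_ge A B 3"
begin

abbreviation "C \<equiv> css_codespace chi A B"

lemma inC: "psi \<in> C \<longleftrightarrow> (\<forall>v\<in>dual_code A. \<forall>x. psi (x - v) = psi x) \<and>
    (\<forall>w\<in>dual_code B. \<forall>x. chi (dotp w x) * psi x = psi x)"
  unfolding css_codespace_def pauliX_def pauliZ_def by (auto simp: fun_eq_iff)

lemma support:
  assumes "psi \<in> C" "psi x \<noteq> 0"
  shows "x \<in> dual_code (dual_code B)"
  unfolding dual_code_def[of "dual_code B"]
proof (intro CollectI ballI)
  fix c assume c: "c \<in> dual_code B"
  show "dotp x c = 0"
  proof (rule ccontr)
    assume d: "dotp x c \<noteq> 0"
    have "chi a = 1" for a
    proof -
      have w: "(a / dotp x c) *s c \<in> dual_code B" using c by (rule dual_scale)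
      have "dotp ((a / dotp x c) *s c) x = a"
        using d by (simp add: dotp_scale dotp_sym[of c x])
      then have "chi a * psi x = psi x" using assms(1) w unfolding inC by metis
      then show "chi a = 1" using assms(2) by simp
    qed
    with chi show False unfolding nontriv_add_char_def by blast
  qed
qed

lemma chi0: assumes "chi 0 \<noteq> 1" "psi \<in> C" shows "psi = (\<lambda>_. 0)"
proof
  fix x
  have "chi (dotp 0 x) * psi x = psi x" using assms(2) dual_zero unfolding inC by blast
  then show "psi x = (\<lambda>_. 0) x" using assms(1) by (simp add: dotp_zero)
qed

definition ind :: "'a^'n \<Rightarrow> ('a^'n \<Rightarrow> complex)" where
  "ind b = (\<lambda>x. if x - b \<in> dual_code A then 1 else 0)"

lemma ind_in:
  assumes c1: "chi 0 = 1" and b: "b \<in> dual_code (dual_code B)"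
  shows "ind b \<in> C"
  unfolding inC
proof (intro conjI ballI allI)
  fix v x assume v: "v \<in> dual_code A"
  have "x - v - b \<in> dual_code A \<longleftrightarrow> x - b \<in> dual_code A"
  proof
    assume "x - v - b \<in> dual_code A"
    then have "(x - v - b) + v \<in> dual_code A" using v by (rule dual_add)
    then show "x - b \<in> dual_code A" by (simp add: algebra_simps)
  next
    assume "x - b \<in> dual_code A"
    then have "(x - b) - v \<in> dual_code A" using v by (rule dual_diff)
    then show "x - v - b \<in> dual_code A" by (simp add: algebra_simps)
  qed
  then show "ind b (x - v) = ind b x" unfolding ind_def by simp
next
  fix w x assume w: "w \<in> dual_code B"
  show "chi (dotp w x) * ind b x = ind b x"
  proof (cases "x - b \<in> dual_code A")
    case True
    have "dotp (x - b) w = 0" using orth True w by blast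
    moreover have "dotp b w = 0" using b w unfolding dual_code_def by blast
    ultimately have "dotp x w = 0" by (simp add: dotp_diff)
    then have "dotp w x = 0" by (simp add: dotp_sym)
    then show ?thesis using c1 True unfolding ind_def by simp
  next
    case False then show ?thesis unfolding ind_def by simp
  qed
qed

lemma keyA:
  assumes u: "\<forall>j\<in>J. u j \<in> A \<and> u j $ j = 1 \<and> (\<forall>j'\<in>J. j' \<noteq> j \<longrightarrow> u j $ j' = 0)"
    and ddA: "dual_code (dual_code A) \<subseteq> A"
    and sp: "\<sigma> permutes UNIV" and fx: "\<forall>i. i \<notin> J \<longrightarrow> \<sigma> i = i"
    and pres: "perm_op \<sigma> ` C \<subseteq> C" and psi: "psi \<in> C"
  shows "perm_op \<sigma> psi = psi"
proof (cases "chi 0 = 1")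
  case False
  then have "psi = (\<lambda>_. 0)" using chi0 psi by blast
  then show ?thesis unfolding perm_op_def by simp
next
  case c1: True
  have phi: "perm_op \<sigma> (ind 0) \<in> C"
    using pres ind_in[OF c1 in_dd[OF vec.subspace_0[OF subB]]] by blast
  have s1: "pv \<sigma> v \<in> dual_code A" if v: "v \<in> dual_code A" for v
  proof -
    have "perm_op \<sigma> (ind 0) (0 - v) = perm_op \<sigma> (ind 0) 0"
      using phi v unfolding inC by blast
    then have "pv \<sigma> (- v) \<in> dual_code A"
      unfolding perm_op_pv ind_def by (simp add: pv_zero dual_zero split: if_splits)
    then have "- pv \<sigma> (- v) \<in> dual_code A" by (rule dual_neg)
    then show ?thesis by (simp add: pv_neg)
  qed
  have s2: "pv \<sigma> y = y" if y: "y \<in> dual_code A" for y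
  proof -
    have "pv \<sigma> y - y = 0"
    proof (rule vanish_on_J)
      show "\<forall>j\<in>J. u j $ j = 1 \<and> (\<forall>j'\<in>J. j' \<noteq> j \<longrightarrow> u j $ j' = 0)" using u by blast
      show "\<forall>i. i \<notin> J \<longrightarrow> (pv \<sigma> y - y) $ i = 0" using fx by simp
      have "pv \<sigma> y - y \<in> dual_code A" using s1[OF y] y by (rule dual_diff)
      then show "\<forall>j\<in>J. dotp (pv \<sigma> y - y) (u j) = 0" using u unfolding dual_code_def by blast
    qed
    then show ?thesis by simp
  qed
  have s4: "ev i - ev (\<sigma> i) \<in> dual_code B" for i
  proof -
    have "ev i - ev (\<sigma> i) \<in> dual_code (dual_code A)"
      unfolding dual_code_def[of "dual_code A"]
    proof (intro CollectI ballI)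
      fix c assume c: "c \<in> dual_code A"
      have "pv \<sigma> c $ i = c $ i" using s2[OF c] by simp
      then have "c $ \<sigma> i = c $ i" by simp
      then show "dotp (ev i - ev (\<sigma> i)) c = 0" by (simp add: dotp_ev2)
    qed
    then have inA: "ev i - ev (\<sigma> i) \<in> A" using ddA by blast
    show ?thesis
    proof (rule ccontr)
      assume "ev i - ev (\<sigma> i) \<notin> dual_code B"
      then have "3 \<le> hweight (ev i - ev (\<sigma> i) :: 'a^'n)" using dist inA unfolding css_distance_ge_def by blast
      moreover have "hweight (ev i - ev (\<sigma> i) :: 'a^'n) \<le> 2" by (rule hweight_ev2)
      ultimately show False by linarith
    qed
  qed
  have s5: "x $ i = x $ \<sigma> i" if x: "x \<in> dual_code (dual_code B)" for x i
  proof -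
    have "dotp x (ev i - ev (\<sigma> i)) = 0" using x s4 unfolding dual_code_def by blast
    then show ?thesis by (simp add: dotp_sym[of x] dotp_ev2)
  qed
  show ?thesis
    unfolding perm_op_pv
  proof
    fix x
    show "psi (pv \<sigma> x) = psi x"
    proof (cases "psi x = 0")
      case False
      then have "x \<in> dual_code (dual_code B)" using support psi by blast
      then have xB: "x \<in> dual_code (dual_code B)" .
      have "pv \<sigma> x = x"
      proof (subst vec_eq_iff, intro allI)
        fix i
        have "x $ i = x $ \<sigma> i" by (rule s5[OF xB])
        then show "pv \<sigma> x $ i = x $ i" by simp
      qed
      then show ?thesis by simp
    next
      case x0: True
      show ?thesis
      proof (cases "psi (pv \<sigma> x) = 0")
        case True with x0 show ?thesis by simp
      next
        case False
        then have y: "pv \<sigma> x \<in> dual_code (dual_code B)" using support psi by blast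
        have "x $ k = x $ \<sigma> k" for k
        proof -
          have "pv \<sigma> x $ (inv \<sigma> k) = pv \<sigma> x $ \<sigma> (inv \<sigma> k)" using s5[OF y] .
          then show ?thesis by (simp add: permutes_inverses[OF sp])
        qed
        then have "pv \<sigma> x = x" by (simp add: vec_eq_iff)
        then show ?thesis by simp
      qed
    qed
  qed
qed

lemma keyB:
  assumes u: "\<forall>j\<in>J. u j \<in> B \<and> u j $ j = 1 \<and> (\<forall>j'\<in>J. j' \<noteq> j \<longrightarrow> u j $ j' = 0)"
    and ddB: "dual_code (dual_code B) \<subseteq> B"
    and sp: "\<sigma> permutes UNIV" and fx: "\<forall>i. i \<notin> J \<longrightarrow> \<sigma> i = i"
    and pres: "perm_op \<sigma> ` C \<subseteq> C" and psi: "psi \<in> C"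
  shows "perm_op \<sigma> psi = psi"
proof (cases "chi 0 = 1")
  case False
  then have "psi = (\<lambda>_. 0)" using chi0 psi by blast
  then show ?thesis unfolding perm_op_def by simp
next
  case c1: True
  have s1: "pv (inv \<sigma>) b \<in> B" if b: "b \<in> B" for b
  proof -
    have phi: "perm_op \<sigma> (ind b) \<in> C"
      using pres ind_in[OF c1 in_dd[OF b]] by blast
    have "pv \<sigma> (pv (inv \<sigma>) b) = b"
      by (simp add: pv_comp vec_eq_iff permutes_inverses[OF sp])
    then have "perm_op \<sigma> (ind b) (pv (inv \<sigma>) b) \<noteq> 0"
      unfolding perm_op_pv ind_def by (simp add: dual_zero)
    then have "pv (inv \<sigma>) b \<in> dual_code (dual_code B)" using support phi by blast
    then show ?thesis using ddB by blast
  qed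
  have reidx: "(\<Sum>i\<in>UNIV. f (\<sigma> i)) = (\<Sum>i\<in>UNIV. f i)" for f :: "'n \<Rightarrow> 'a"
    using sum.permute[OF sp, of f] by (simp add: comp_def)
  have s2: "pv \<sigma> w \<in> dual_code B" if w: "w \<in> dual_code B" for w
    unfolding dual_code_def
  proof (intro CollectI ballI)
    fix b assume b: "b \<in> B"
    have "dotp (pv \<sigma> w) b = (\<Sum>i\<in>UNIV. (\<lambda>k. w $ k * b $ inv \<sigma> k) (\<sigma> i))"
      unfolding dotp_def by (simp add: permutes_inverses[OF sp])
    also have "\<dots> = (\<Sum>i\<in>UNIV. w $ i * b $ inv \<sigma> i)"
      using reidx[of "\<lambda>k. w $ k * b $ inv \<sigma> k"] by simp
    also have "\<dots> = dotp w (pv (inv \<sigma>) b)"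
      unfolding dotp_def by simp
    also have "\<dots> = 0" using w s1[OF b] unfolding dual_code_def by blast
    finally show "dotp (pv \<sigma> w) b = 0" .
  qed
  have s3: "pv \<sigma> w = w" if w: "w \<in> dual_code B" for w
  proof -
    have "pv \<sigma> w - w = 0"
    proof (rule vanish_on_J)
      show "\<forall>j\<in>J. u j $ j = 1 \<and> (\<forall>j'\<in>J. j' \<noteq> j \<longrightarrow> u j $ j' = 0)" using u by blast
      show "\<forall>i. i \<notin> J \<longrightarrow> (pv \<sigma> w - w) $ i = 0" using fx by simp
      have "pv \<sigma> w - w \<in> dual_code B" using s2[OF w] w by (rule dual_diff)
      then show "\<forall>j\<in>J. dotp (pv \<sigma> w - w) (u j) = 0" using u unfolding dual_code_def by blast
    qed
    then show ?thesis by simp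
  qed
  have s4: "ev i - ev (\<sigma> i) \<in> dual_code A" for i
  proof -
    have "ev i - ev (\<sigma> i) \<in> dual_code (dual_code B)"
      unfolding dual_code_def[of "dual_code B"]
    proof (intro CollectI ballI)
      fix c assume c: "c \<in> dual_code B"
      have "pv \<sigma> c $ i = c $ i" using s3[OF c] by simp
      then have "c $ \<sigma> i = c $ i" by simp
      then show "dotp (ev i - ev (\<sigma> i)) c = 0" by (simp add: dotp_ev2)
    qed
    then have inB: "ev i - ev (\<sigma> i) \<in> B" using ddB by blast
    show ?thesis
    proof (rule ccontr)
      assume "ev i - ev (\<sigma> i) \<notin> dual_code A"
      then have "3 \<le> hweight (ev i - ev (\<sigma> i) :: 'a^'n)" using dist inB unfolding css_distance_ge_def by blast
      moreover have "hweight (ev i - ev (\<sigma> i) :: 'a^'n) \<le> 2" by (rule hweight_ev2)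
      ultimately show False by linarith
    qed
  qed
  have s5: "a $ i = a $ \<sigma> i" if a: "a \<in> A" for a i
  proof -
    have "dotp (ev i - ev (\<sigma> i)) a = 0" using a s4 unfolding dual_code_def by blast
    then show ?thesis by (simp add: dotp_ev2)
  qed
  have s6: "x - pv \<sigma> x \<in> dual_code A" for x
    unfolding dual_code_def
  proof (intro CollectI ballI)
    fix a assume a: "a \<in> A"
    have "dotp (pv \<sigma> x) a = (\<Sum>i\<in>UNIV. (\<lambda>k. x $ k * a $ k) (\<sigma> i))"
      unfolding dotp_def
    proof (intro sum.cong refl)
      fix i
      have "a $ i = a $ \<sigma> i" by (rule s5[OF a])
      then show "pv \<sigma> x $ i * a $ i = x $ \<sigma> i * a $ \<sigma> i" by simp
    qed
    also have "\<dots> = (\<Sum>i\<in>UNIV. x $ i * a $ i)"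
      using reidx[of "\<lambda>k. x $ k * a $ k"] by simp
    also have "\<dots> = dotp x a" unfolding dotp_def by simp
    finally show "dotp (x - pv \<sigma> x) a = 0" by (simp add: dotp_diff)
  qed
  show ?thesis
    unfolding perm_op_pv
  proof
    fix x
    have "psi (x - (x - pv \<sigma> x)) = psi x" using psi s6 unfolding inC by blast
    then show "psi (pv \<sigma> x) = psi x" by simp
  qed
qed

end

lemma fact_prod_nat: "k \<le> n \<Longrightarrow> (\<Prod>i\<in>{0..<k}. n - i) * fact (n - k) = (fact n :: nat)"
proof (induction k)
  case 0 then show ?case by simp
next
  case (Suc k)
  then have IH: "(\<Prod>i\<in>{0..<k}. n - i) * fact (n - k) = (fact n :: nat)" by simp
  have nk: "n - k = Suc (n - Suc k)" using Suc.prems by simp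
  have "(\<Prod>i\<in>{0..<Suc k}. n - i) * fact (n - Suc k) = (\<Prod>i\<in>{0..<k}. n - i) * ((n - k) * fact (n - Suc k))"
    by (simp add: prod.atLeast0_lessThan_Suc algebra_simps)
  also have "(n - k) * fact (n - Suc k) = (fact (n - k) :: nat)"
    by (simp only: nk fact_Suc) simp
  finally show ?case using IH by simp
qed

lemma count_bound:
  fixes f :: "('n::finite \<Rightarrow> 'n) \<Rightarrow> 'b" and S :: "('n \<Rightarrow> 'n) set"
  assumes perm: "\<forall>s\<in>S. s permutes UNIV"
    and Q: "\<forall>s\<in>S. \<forall>t\<in>S. (\<forall>i. i \<notin> J \<longrightarrow> s i = t i) \<longrightarrow> f s = f t"
  shows "real (card (f ` S)) \<le> fact CARD('n) / fact (card J)"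
proof -
  define I where "I = UNIV - J"
  define g where "g s = restrict s I" for s :: "'n \<Rightarrow> 'n"
  have fS: "f ` S \<subseteq> (\<lambda>r. f (SOME s. s \<in> S \<and> g s = r)) ` (g ` S)"
  proof
    fix y assume "y \<in> f ` S"
    then obtain s where s: "s \<in> S" "y = f s" by blast
    define s' where "s' = (SOME s'. s' \<in> S \<and> g s' = g s)"
    have s': "s' \<in> S \<and> g s' = g s" unfolding s'_def by (rule someI[of _ s]) (use s in simp)
    have "\<forall>i. i \<notin> J \<longrightarrow> s i = s' i"
    proof (intro allI impI)
      fix i assume "i \<notin> J"
      then have "i \<in> I" unfolding I_def by simp
      then show "s i = s' i" using s' unfolding g_def by (metis restrict_apply')
    qed
    then have "f s = f s'" using Q s(1) s' by blast
    then have "y = (\<lambda>r. f (SOME s. s \<in> S \<and> g s = r)) (g s)"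
      using s unfolding s'_def by simp
    moreover have "g s \<in> g ` S" using s(1) by (rule imageI)
    ultimately show "y \<in> (\<lambda>r. f (SOME s. s \<in> S \<and> g s = r)) ` (g ` S)"
      by (rule image_eqI)
  qed
  have gS: "g ` S \<subseteq> {r \<in> I \<rightarrow>\<^sub>E UNIV. inj_on r I}"
  proof
    fix r assume "r \<in> g ` S"
    then obtain s where s: "s \<in> S" "r = g s" by blast
    have "inj s" using perm s(1) permutes_inj by blast
    then have "inj_on r I" unfolding s(2) g_def inj_on_def by simp
    moreover have "r \<in> I \<rightarrow>\<^sub>E UNIV" unfolding s(2) g_def by simp
    ultimately show "r \<in> {r \<in> I \<rightarrow>\<^sub>E UNIV. inj_on r I}" by simp
  qed
  have finS: "finite {r \<in> I \<rightarrow>\<^sub>E (UNIV::'n set). inj_on r I}"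
    by (rule finite_subset[OF _ finite_PiE[of I "\<lambda>_. UNIV"]]) auto
  have fg: "finite (g ` S)" by (rule finite_subset[OF gS finS])
  have "card (f ` S) \<le> card ((\<lambda>r. f (SOME s. s \<in> S \<and> g s = r)) ` (g ` S))"
    by (rule card_mono[OF finite_imageI[OF fg] fS])
  also have "\<dots> \<le> card (g ` S)" by (rule card_image_le[OF fg])
  also have "\<dots> \<le> card {r \<in> I \<rightarrow>\<^sub>E (UNIV::'n set). inj_on r I}"
    by (rule card_mono[OF finS gS])
  also have "\<dots> = CARD('n) ^ (card I - card I) * prod ((-) CARD('n)) {0..<card I}"
    by (rule card_inj_on_subset_funcset) auto
  also have "\<dots> = (\<Prod>i\<in>{0..<card I}. CARD('n) - i)" by simp
  finally have c1: "card (f ` S) \<le> (\<Prod>i\<in>{0..<card I}. CARD('n) - i)" .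
  have cJ: "card J \<le> CARD('n)" by (rule card_mono) auto
  have cI: "card I = CARD('n) - card J" unfolding I_def by (rule card_Diff_subset) auto
  have eq: "(\<Prod>i\<in>{0..<card I}. CARD('n) - i) * fact (card J) = (fact CARD('n) :: nat)"
    using fact_prod_nat[of "card I" "CARD('n)"] cI cJ by (simp add: diff_diff_cancel)
  have "real (card (f ` S)) \<le> real (\<Prod>i\<in>{0..<card I}. CARD('n) - i)" using c1 by linarith
  also have "\<dots> = fact CARD('n) / fact (card J)"
  proof -
    have "real (\<Prod>i\<in>{0..<card I}. CARD('n) - i) * fact (card J) = fact CARD('n)"
      using arg_cong[OF eq, of real] by (simp add: of_nat_fact)
    then show ?thesis by (simp add: field_simps)
  qed
  finally show ?thesis .
qed

context cssl begin

lemma Qlemma: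
  assumes key: "\<And>\<sigma> psi. \<sigma> permutes UNIV \<Longrightarrow> (\<forall>i. i \<notin> J \<longrightarrow> \<sigma> i = i) \<Longrightarrow> perm_op \<sigma> ` C \<subseteq> C \<Longrightarrow> psi \<in> C \<Longrightarrow> perm_op \<sigma> psi = psi"
  shows "\<forall>s\<in>{s. s permutes UNIV \<and> perm_op s ` C = C}. \<forall>t\<in>{s. s permutes UNIV \<and> perm_op s ` C = C}.
     (\<forall>i. i \<notin> J \<longrightarrow> s i = t i) \<longrightarrow> restrict (perm_op s) C = restrict (perm_op t) C"
proof (intro ballI impI)
  fix s t assume s: "s \<in> {s. s permutes UNIV \<and> perm_op s ` C = C}" and t: "t \<in> {s. s permutes UNIV \<and> perm_op s ` C = C}"
    and agree: "\<forall>i. i \<notin> J \<longrightarrow> s i = t i"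
  define \<sigma> where "\<sigma> = inv t \<circ> s"
  have sp: "s permutes UNIV" and tp: "t permutes UNIV" using s t by auto
  have sigp: "\<sigma> permutes UNIV" unfolding \<sigma>_def by (intro permutes_compose permutes_inv sp tp)
  have fixJ: "\<forall>i. i \<notin> J \<longrightarrow> \<sigma> i = i" unfolding \<sigma>_def using agree by (simp add: permutes_inverses[OF tp])
  have st: "s = t \<circ> \<sigma>" unfolding \<sigma>_def by (simp add: fun_eq_iff permutes_inverses[OF tp])
  have invC: "perm_op (inv t) phi \<in> C" if phi: "phi \<in> C" for phi
  proof -
    from phi t obtain phi' where phi': "phi' \<in> C" "phi = perm_op t phi'" by blast
    have "perm_op (inv t) phi = perm_op (inv t \<circ> t) phi'" by (simp add: phi'(2) perm_op_comp)
    also have "inv t \<circ> t = id" using permutes_inv_o[OF tp] by simp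
    finally show ?thesis using phi' by (simp add: perm_op_id perm_op_id[unfolded id_def])
  qed
  have pres: "perm_op \<sigma> ` C \<subseteq> C"
  proof
    fix y assume "y \<in> perm_op \<sigma> ` C"
    then obtain psi where psi: "psi \<in> C" "y = perm_op \<sigma> psi" by blast
    have "perm_op s psi \<in> C" using s psi by blast
    then show "y \<in> C" using invC psi unfolding \<sigma>_def by (simp add: perm_op_comp)
  qed
  show "restrict (perm_op s) C = restrict (perm_op t) C"
  proof
    fix psi
    show "restrict (perm_op s) C psi = restrict (perm_op t) C psi"
    proof (cases "psi \<in> C")
      case True
      have "perm_op s psi = perm_op t (perm_op \<sigma> psi)" by (simp add: st perm_op_comp)
      also have "perm_op \<sigma> psi = psi" by (rule key[OF sigp fixJ pres True])
      finally show ?thesis by simp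
    qed simp
  qed
qed

end

theorem theorem2:
  fixes A B :: "('a::{field,finite} ^ 'n::finite) set"
    and chi :: "'a \<Rightarrow> complex"
  assumes "vec.subspace A" and "vec.subspace B"
    and "\<forall>u\<in>dual_code A. \<forall>w\<in>dual_code B. dotp u w = 0"
    and "nontriv_add_char chi"
    and "css_distance_ge A B 3"
  shows "real (card (perm_logical_ops (css_codespace chi A B)))
           \<le> fact CARD('n) / fact (max (vec.dim A) (vec.dim B))"
proof -
  interpret cssl A B chi using assms by unfold_locales
  define S where "S = {s. s permutes (UNIV::'n set) \<and> perm_op s ` C = C}"
  define f where "f s = restrict (perm_op s) C" for s :: "'n \<Rightarrow> 'n"
  have pl: "perm_logical_ops C = f ` S" unfolding perm_logical_ops_def f_def S_def by simp
  have permS: "\<forall>s\<in>S. s permutes UNIV" unfolding S_def by simp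
  obtain JA uA where uA: "\<forall>j\<in>JA. uA j \<in> A \<and> uA j $ j = 1 \<and> (\<forall>j'\<in>JA. j' \<noteq> j \<longrightarrow> uA j $ j' = 0)"
    and dcA: "\<forall>v\<in>A. v = (\<Sum>j\<in>JA. (v $ j) *s uA j)"
    and dA: "vec.dim A \<le> card JA" and ddA: "dual_code (dual_code A) \<subseteq> A"
    by (rule infoset[OF subA])
  obtain JB uB where uB: "\<forall>j\<in>JB. uB j \<in> B \<and> uB j $ j = 1 \<and> (\<forall>j'\<in>JB. j' \<noteq> j \<longrightarrow> uB j $ j' = 0)"
    and dcB: "\<forall>v\<in>B. v = (\<Sum>j\<in>JB. (v $ j) *s uB j)"
    and dB: "vec.dim B \<le> card JB" and ddB: "dual_code (dual_code B) \<subseteq> B"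
    by (rule infoset[OF subB])
  have bA: "real (card (f ` S)) \<le> fact CARD('n) / fact (card JA)"
    by (rule count_bound[OF permS]) (unfold S_def f_def, rule Qlemma, rule keyA[OF uA ddA])
  have bB: "real (card (f ` S)) \<le> fact CARD('n) / fact (card JB)"
    by (rule count_bound[OF permS]) (unfold S_def f_def, rule Qlemma, rule keyB[OF uB ddB])
  have mono: "fact CARD('n) / fact J \<le> (fact CARD('n) / fact k :: real)" if "k \<le> J" for k J :: nat
    by (rule divide_left_mono) (use that in \<open>auto intro: fact_mono\<close>)
  show ?thesis
  proof (cases "vec.dim A \<le> vec.dim B")
    case True
    then show ?thesis unfolding pl using bB mono[OF dB] by (simp add: max_def)
  next
    case False
    then show ?thesis unfolding pl using bA mono[OF dA] by (simp add: max_def)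
  qed
qed

end
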